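(* Let $\{c_n\}_{n\ge1}$ be a real sequence, $\{d_{n+1}\}_{n\ge1}$ a positive chain sequence, and let $P_0(x)=1$, $P_1(x)=x-c_1$, $P_{n+1}(x)=(x-c_{n+1})P_n(x)-d_{n+1}(x^2+1)P_{n-1}(x)$ for $n\ge1$. Then the zeros $x_j^{(n)}$, $j=1,\dots,n$, of $P_n$ are real and simple, and, ordering them so that $x_n^{(n)}<x_{n-1}^{(n)}<\dots<x_1^{(n)}$, they interlace: \[ x_{n+1}^{(n+1)}<x_n^{(n)}<x_n^{(n+1)}<\dots<x_2^{(n+1)}<x_1^{(n)}<x_1^{(n+1)},\qquad n\ge1 . \]
   Context: A sequence $\{d_{n+1}\}_{n\ge1}$ is a positive chain sequence if there is a sequence $\{g_{n+1}\}_{n\ge0}$ with $0\le g_1<1$, $0<g_n<1$ for $n\ge2$, and $d_{n+1}=(1-g_n)g_{n+1}$ for $n\ge1$. *)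

theory Defs
  imports "HOL-Computational_Algebra.Polynomial"
begin

text \<open>Positive chain sequence: d (n+1) for n \<ge> 1 is given by d :: nat \<Rightarrow> real
  (values d 0, d 1 irrelevant); parameter sequence g 1, g 2, ... given by g :: nat \<Rightarrow> real.\<close>
definition positive_chain_sequence :: "(nat \<Rightarrow> real) \<Rightarrow> bool" where
  "positive_chain_sequence d \<longleftrightarrow>
     (\<exists>g :: nat \<Rightarrow> real. 0 \<le> g 1 \<and> g 1 < 1 \<and> (\<forall>n\<ge>2. 0 < g n \<and> g n < 1) \<and>
        (\<forall>n\<ge>1. d (n + 1) = (1 - g n) * g (n + 1)))"

fun Pseq :: "(nat \<Rightarrow> real) \<Rightarrow> (nat \<Rightarrow> real) \<Rightarrow> nat \<Rightarrow> real poly" where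
  "Pseq c d 0 = 1"
| "Pseq c d (Suc 0) = [:- c 1, 1:]"
| "Pseq c d (Suc (Suc n)) =
     [:- c (n + 2), 1:] * Pseq c d (Suc n) - smult (d (n + 2)) [:1, 0, 1:] * Pseq c d n"

end

theory Submission
  imports Defs
begin


lemma step_deg:
  fixes p q :: "real poly"
  assumes "degree p \<le> Suc m" "degree q \<le> m"
  shows "degree ([:a, 1:] * p - smult e [:1, 0, 1:] * q) \<le> Suc (Suc m)"
proof (rule degree_diff_le)
  show "degree ([:a, 1:] * p) \<le> Suc (Suc m)"
    by (rule order.trans[OF degree_mult_le]) (use assms in simp)
  show "degree (smult e [:1, 0, 1:] * q) \<le> Suc (Suc m)"
    by (rule order.trans[OF degree_mult_le]) (use assms in \<open>simp add: order.trans[OF degree_smult_le]\<close>)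
qed

lemma step_coeff:
  fixes p q :: "real poly"
  assumes "degree p \<le> Suc m" "degree q \<le> m"
  shows "coeff ([:a, 1:] * p - smult e [:1, 0, 1:] * q) (Suc (Suc m)) = coeff p (Suc m) - e * coeff q m"
proof -
  have z: "coeff p (Suc (Suc m)) = 0" "coeff q (Suc (Suc m)) = 0" "coeff q (Suc m) = 0"
    using assms by (simp_all add: coeff_eq_0)
  show ?thesis using z by (simp add: mult_pCons_left coeff_pCons)
qed

lemma Pseq_deg: "degree (Pseq c d n) \<le> n"
proof (induction n rule: Pseq.induct)
  case (3 c d n)
  show ?case unfolding Pseq.simps(3) using 3 by (intro step_deg) auto
qed auto

lemma Pseq_coeff: "coeff (Pseq c d (Suc (Suc n))) (Suc (Suc n)) =
     coeff (Pseq c d (Suc n)) (Suc n) - d (n+2) * coeff (Pseq c d n) n"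
  unfolding Pseq.simps(3) by (rule step_coeff) (rule Pseq_deg)+



lemma Lpos:
  fixes g :: "nat \<Rightarrow> real"
  assumes g1: "0 \<le> g 1" "g 1 < 1" and g2: "\<forall>n\<ge>2. 0 < g n \<and> g n < 1"
    and dg: "\<forall>n\<ge>1. d (n + 1) = (1 - g n) * g (n + 1)"
  shows "coeff (Pseq c d (Suc n)) (Suc n) \<ge> (1 - g (Suc n)) * coeff (Pseq c d n) n
     \<and> coeff (Pseq c d n) n > 0"
proof (induction n)
  case 0
  then show ?case using g1 by simp
next
  case (Suc n)
  let ?L = "\<lambda>n. coeff (Pseq c d n) n"
  have IH1: "?L (Suc n) \<ge> (1 - g (Suc n)) * ?L n" and IH2: "?L n > 0" using Suc by auto
  have gs: "g (Suc n) < 1" using g1 g2 by (cases n) auto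
  have gss: "0 < g (Suc (Suc n))" "g (Suc (Suc n)) < 1" using g2 by auto
  have pos1: "?L (Suc n) > 0" using IH1 IH2 gs
    by (smt (verit) mult_pos_pos)
  have dd: "d (n + 2) = (1 - g (Suc n)) * g (Suc (Suc n))" using dg[rule_format, of "Suc n"] by simp
  have rec: "?L (Suc (Suc n)) = ?L (Suc n) - d (n+2) * ?L n" by (rule Pseq_coeff)
  have "d (n+2) * ?L n = g (Suc (Suc n)) * ((1 - g (Suc n)) * ?L n)" using dd by simp
  also have "\<dots> \<le> g (Suc (Suc n)) * ?L (Suc n)" using IH1 gss by (intro mult_left_mono) auto
  finally have "?L (Suc (Suc n)) \<ge> (1 - g (Suc (Suc n))) * ?L (Suc n)" using rec
    by (simp add: algebra_simps)
  then show ?case using pos1 by simp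
qed



lemma dec_mono:
  fixes r :: "nat \<Rightarrow> real" and i j m :: nat
  assumes "\<forall>j. 1\<le>j \<and> j<m \<longrightarrow> r (j+1) < (r j :: real)" "1 \<le> i" "i < j" "j \<le> m"
  shows "r j < r i"
proof -
  have "\<forall>k. i < k \<and> k \<le> m \<longrightarrow> r k < r i"
  proof (intro allI)
    fix k show "i < k \<and> k \<le> m \<longrightarrow> r k < r i"
    proof (induction k)
      case 0 then show ?case by simp
    next
      case (Suc k)
      show ?case
      proof
        assume h: "i < Suc k \<and> Suc k \<le> m"
        show "r (Suc k) < r i"
        proof (cases "k = i")
          case True then show ?thesis using assms(1)[rule_format, of i] assms(2) h by simp
        next
          case False
          then have "r k < r i" using Suc h by simp
          moreover have "r (Suc k) < r k" using assms(1)[rule_format, of k] assms(2) h False by simp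
          ultimately show ?thesis by simp
        qed
      qed
    qed
  qed
  then show ?thesis using assms by simp
qed

lemma dec_inj:
  fixes r :: "nat \<Rightarrow> real"
  assumes "\<forall>j. 1\<le>j \<and> j<m \<longrightarrow> r (j+1) < (r j :: real)"
  shows "inj_on r {1..m}"
proof (rule inj_onI)
  fix x y assume "x \<in> {1..m}" "y \<in> {1..m}" "r x = r y"
  then show "x = y" using dec_mono[OF assms, of x y] dec_mono[OF assms, of y x]
    by (cases x y rule: linorder_cases) auto
qed

lemma prod_lin_lc: "lead_coeff (\<Prod>j\<in>A. [:- (r j :: real), 1:]) = 1"
  by (simp add: lead_coeff_prod)

lemma prod_lin_deg: "finite A \<Longrightarrow> degree (\<Prod>j\<in>A. [:- (r j :: real), 1:]) = card A"
  by (subst degree_prod_eq_sum_degree) auto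

lemma prod_lin_coeff: "coeff (\<Prod>j\<in>{1..m}. [:- (r j :: real), 1:]) m = 1"
  using prod_lin_lc[of r "{1..m}"] prod_lin_deg[of "{1..m}" r] by simp

lemma factor_lemma:
  fixes p :: "real poly"
  assumes "degree p \<le> m" "coeff p m = L"
    and dec: "\<forall>j. 1\<le>j \<and> j<m \<longrightarrow> t (j+1) < t j"
    and roots: "\<And>j. 1 \<le> j \<Longrightarrow> j \<le> m \<Longrightarrow> poly p (t j) = 0"
  shows "p = smult L (\<Prod>j=1..m. [:- t j, 1:])"
proof (rule poly_eqI_degree_lead_coeff[where n = m and A = "t ` {1..m}"])
  show "coeff p m = coeff (smult L (\<Prod>j = 1..m. [:- t j, 1:])) m"
    using assms(2) prod_lin_coeff[of t m] by simp
  show "m \<le> card (t ` {1..m})" using card_image[OF dec_inj[OF dec]] by simp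
  show "degree p \<le> m" by fact
  show "degree (smult L (\<Prod>j = 1..m. [:- t j, 1:])) \<le> m"
    using prod_lin_deg[of "{1..m}" t] by (simp add: order.trans[OF degree_smult_le])
  fix z assume "z \<in> t ` {1..m}"
  then obtain j where j: "j \<in> {1..m}" "z = t j" by auto
  have "poly (\<Prod>j = 1..m. [:- t j, 1:]) z = 0"
    using j by (auto simp: poly_prod intro!: bexI[of _ j])
  then show "poly p z = poly (smult L (\<Prod>j = 1..m. [:- t j, 1:])) z"
    using roots j by simp
qed

lemma pinf_pos:
  fixes p :: "real poly" assumes "lead_coeff p > 0"
  shows "\<exists>x>b. poly p x > 0"
proof -
  obtain N where N: "\<forall>x\<ge>N. poly p x \<ge> lead_coeff p" using poly_pinfty_gt_lc[OF assms] by blast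
  show ?thesis using N[rule_format, of "max N (b+1)"] assms
    by (intro exI[of _ "max N (b+1)"]) auto
qed

lemma minf_sign:
  fixes p :: "real poly" assumes "lead_coeff p > 0"
  shows "\<exists>x<b. (-1) ^ degree p * poly p x > 0"
proof -
  define q where "q = smult ((-1) ^ degree p) (pcompose p [:0, -1:])"
  have "lead_coeff (pcompose p [:0, -1:]) = lead_coeff p * (-1) ^ degree p"
    by (subst lead_coeff_comp) auto
  moreover have "degree (pcompose p [:0, -1:]) = degree p" by (simp add: degree_pcompose)
  ultimately have "lead_coeff q = lead_coeff p"
    unfolding q_def by (simp add: power_mult_distrib[symmetric])
  then obtain y where y: "y > - b" "poly q y > 0" using pinf_pos[of q "-b"] assms by auto
  show ?thesis using y unfolding q_def by (intro exI[of _ "-y"]) (auto simp: poly_pcompose)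
qed



lemma sign_at:
  fixes r s :: "nat \<Rightarrow> real"
  assumes decS: "\<forall>j. 1\<le>j \<and> j<n+1 \<longrightarrow> s (j+1) < s j"
    and inter: "\<forall>j. 1\<le>j \<and> j\<le>n \<longrightarrow> s (j+1) < r j \<and> r j < s j"
    and k: "1 \<le> k" "k \<le> n+1"
  shows "(-1)^(k-1) * (\<Prod>j=1..n. (s k - r j)) > 0"
proof -
  define f where "f j = (if j < k then r j - s k else s k - r j)" for j
  have fpos: "f j > 0" if j: "j \<in> {1..n}" for j
  proof (cases "j < k")
    case True
    have "s k \<le> s (j+1)"
    proof (cases "j + 1 = k")
      case False then show ?thesis using dec_mono[OF decS, of "j+1" k] True j k by auto
    qed simp
    then show ?thesis using True inter j unfolding f_def by force
  next
    case False
    have "s j \<le> s k"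
    proof (cases "j = k")
      case False then show ?thesis using dec_mono[OF decS, of k j] \<open>\<not> j < k\<close> j k by auto
    qed simp
    then show ?thesis using False inter j unfolding f_def by force
  qed
  have eq: "(\<Prod>j=1..n. (s k - r j)) = (\<Prod>j=1..n. ((if j < k then -1 else 1) * f j))"
    by (rule prod.cong) (auto simp: f_def)
  have "(\<Prod>j=1..n. (if j < k then -1 else 1::real)) =
        (\<Prod>j\<in>{1..n} \<inter> {j. j<k}. -1) * (\<Prod>j\<in>{1..n} \<inter> - {j. j<k}. 1)"
    by (rule prod.If_cases) simp
  also have "{1..n} \<inter> {j. j<k} = {1..<k}" using k by auto
  finally have sg: "(\<Prod>j=1..n. (if j < k then -1 else 1::real)) = (-1)^(k-1)" by simp
  have "(\<Prod>j=1..n. (s k - r j)) = (-1)^(k-1) * (\<Prod>j=1..n. f j)"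
    unfolding eq prod.distrib sg ..
  then have "(-1)^(k-1) * (\<Prod>j=1..n. (s k - r j)) = (\<Prod>j=1..n. f j)"
    by (simp add: minus_one_mult_self mult.assoc[symmetric])
  also have "\<dots> > 0" using fpos by (intro prod_pos) auto
  finally show ?thesis .
qed

lemma deg_exact: "degree (p::real poly) \<le> m \<Longrightarrow> coeff p m \<noteq> 0 \<Longrightarrow> degree p = m"
  using le_degree by (metis antisym)



lemma main_step:
  fixes c d :: "nat \<Rightarrow> real" and r s :: "nat \<Rightarrow> real"
  defines "P \<equiv> Pseq c d"
  assumes Lpos: "\<And>m. coeff (P m) m > 0"
    and dpos: "d (n+2) > 0"
    and decR: "\<forall>j. 1\<le>j \<and> j<n \<longrightarrow> r (j+1) < r j"
    and facR: "P n = smult (coeff (P n) n) (\<Prod>j=1..n. [:- r j, 1:])"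
    and decS: "\<forall>j. 1\<le>j \<and> j<n+1 \<longrightarrow> s (j+1) < s j"
    and facS: "P (n+1) = smult (coeff (P (n+1)) (n+1)) (\<Prod>j=1..n+1. [:- s j, 1:])"
    and inter: "\<forall>j. 1\<le>j \<and> j\<le>n \<longrightarrow> s (j+1) < r j \<and> r j < s j"
  shows "\<exists>t. (\<forall>j. 1\<le>j \<and> j<n+2 \<longrightarrow> t (j+1) < t j) \<and>
     P (n+2) = smult (coeff (P (n+2)) (n+2)) (\<Prod>j=1..n+2. [:- t j, 1:]) \<and>
     (\<forall>j. 1\<le>j \<and> j\<le>n+1 \<longrightarrow> t (j+1) < s j \<and> s j < t j)"
proof -
  let ?Q = "P (n+2)"
  have vals: "(-1)^(k-1) * poly ?Q (s k) < 0" if k: "1 \<le> k" "k \<le> n+1" for k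
  proof -
    have z0: "(\<Prod>j=1..n+1. poly [:- s j, 1:] (s k)) = 0"
      by (rule prod_zero) (use k in auto)
    have z: "poly (P (n+1)) (s k) = 0"
      by (subst facS) (simp only: poly_smult poly_prod z0 mult_zero_right)
    have pn: "poly (P n) (s k) = coeff (P n) n * (\<Prod>j=1..n. (s k - r j))"
      by (subst facR) (simp add: poly_prod)
    have h: "poly ?Q (s k) = - (d (n+2) * ((s k)^2 + 1)) * poly (P n) (s k)"
      using z unfolding P_def by (simp add: numeral_2_eq_2 power2_eq_square algebra_simps)
    have "(-1)^(k-1) * poly ?Q (s k) =
        - (d (n+2) * ((s k)^2 + 1) * coeff (P n) n) * ((-1)^(k-1) * (\<Prod>j=1..n. (s k - r j)))"
      unfolding h pn by algebra
    also have "\<dots> < 0"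
      using sign_at[OF decS inter k] dpos Lpos[of n]
      by (intro mult_neg_pos) (auto intro!: mult_pos_pos add_nonneg_pos)
    finally show ?thesis .
  qed
  have degQ: "degree ?Q = n+2"
    using Lpos[of "n+2"] unfolding P_def by (intro deg_exact Pseq_deg) auto
  have lcQ: "lead_coeff ?Q > 0" using degQ Lpos[of "n+2"] by simp
  have ex: "\<exists>x. 1 \<le> k \<and> k \<le> n+2 \<longrightarrow> poly ?Q x = 0 \<and> (2 \<le> k \<longrightarrow> x < s (k-1)) \<and> (k \<le> n+1 \<longrightarrow> s k < x)" for k
  proof (cases "1 \<le> k \<and> k \<le> n+2")
    case False then show ?thesis by blast
  next
    case True
    consider "k = 1" | "2 \<le> k" "k \<le> n+1" | "k = n+2" using True by linarith
    then show ?thesis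
    proof cases
      case 1
      have a: "poly ?Q (s 1) < 0" using vals[of 1] by simp
      obtain y where y: "y > s 1" "poly ?Q y > 0" using pinf_pos[OF lcQ, of "s 1"] by blast
      obtain x where "s 1 < x" "x < y" "poly ?Q x = 0" using poly_IVT_pos[OF y(1) a y(2)] by blast
      then show ?thesis using 1 by auto
    next
      case 2
      define e :: real where "e = (-1)^(k-2)"
      have e1: "(-1::real)^(k-1) = - e" unfolding e_def using 2
        by (metis Suc_diff_Suc Suc_1 diff_Suc_1 le_eq_less_or_eq less_eq_Suc_le power_Suc mult_minus1 Suc_le_lessD)
      have e2: "e * e = 1" unfolding e_def by (simp add: minus_one_mult_self)
      have A: "(- e) * poly ?Q (s k) < 0" using vals[of k] 2 e1 by simp
      have B: "e * poly ?Q (s (k-1)) < 0" using vals[of "k-1"] 2 unfolding e_def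
        by (simp add: numeral_2_eq_2 diff_diff_add)
      have "((- e) * poly ?Q (s k)) * (e * poly ?Q (s (k-1))) > 0" using mult_neg_neg[OF A B] .
      then have "- (e*e) * (poly ?Q (s k) * poly ?Q (s (k-1))) > 0" by (simp add: algebra_simps)
      then have prod: "poly ?Q (s k) * poly ?Q (s (k-1)) < 0" using e2 by simp
      have kk: "1 \<le> k-1 \<and> k-1 < n+1" "k - 1 + 1 = k" using 2 by linarith+
      have lt: "s k < s (k-1)" using decS[rule_format, OF kk(1)] unfolding kk(2) .
      obtain x where "s k < x" "x < s (k-1)" "poly ?Q x = 0" using poly_IVT[OF lt prod] by blast
      then show ?thesis using 2 by auto
    next
      case 3
      obtain y where y: "y < s (n+1)" "(-1)^(n+2) * poly ?Q y > 0"
        using minf_sign[OF lcQ, of "s (n+1)"] degQ by auto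
      have B: "(-1)^n * poly ?Q (s (n+1)) < 0" using vals[of "n+1"] by simp
      have A: "(-1)^n * poly ?Q y > 0" using y(2) by simp
      have "((-1)^n * poly ?Q y) * ((-1)^n * poly ?Q (s (n+1))) < 0" using mult_pos_neg[OF A B] .
      moreover have "((-1)^n * poly ?Q y) * ((-1)^n * poly ?Q (s (n+1))) =
          ((-1::real)^n * (-1)^n) * (poly ?Q y * poly ?Q (s (n+1)))" by (simp only: mult_ac)
      ultimately have prod: "poly ?Q y * poly ?Q (s (n+1)) < 0"
        by (simp only: minus_one_mult_self mult_1)
      obtain x where "y < x" "x < s (n+1)" "poly ?Q x = 0" using poly_IVT[OF y(1) prod] by blast
      then show ?thesis using 3 by auto
    qed
  qed
  then have "\<forall>k. \<exists>x. 1 \<le> k \<and> k \<le> n+2 \<longrightarrow> poly ?Q x = 0 \<and> (2 \<le> k \<longrightarrow> x < s (k-1)) \<and> (k \<le> n+1 \<longrightarrow> s k < x)" by blast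
  from choice[OF this] obtain t where t0: "\<forall>k. 1 \<le> k \<and> k \<le> n+2 \<longrightarrow> poly ?Q (t k) = 0 \<and> (2 \<le> k \<longrightarrow> t k < s (k-1)) \<and> (k \<le> n+1 \<longrightarrow> s k < t k)"
    by blast
  have t: "poly ?Q (t k) = 0 \<and> (2 \<le> k \<longrightarrow> t k < s (k-1)) \<and> (k \<le> n+1 \<longrightarrow> s k < t k)"
    if "1 \<le> k" "k \<le> n+2" for k using t0 that by blast
  have it: "\<forall>j. 1\<le>j \<and> j\<le>n+1 \<longrightarrow> t (j+1) < s j \<and> s j < t j"
  proof (intro allI impI)
    fix j assume j: "1\<le>j \<and> j\<le>n+1"
    have a: "t (j+1) < s j" using t[of "j+1"] j by simp
    have b: "s j < t j" using t[of j] j by simp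
    show "t (j+1) < s j \<and> s j < t j" using a b ..
  qed
  have dt: "\<forall>j. 1\<le>j \<and> j<n+2 \<longrightarrow> t (j+1) < t j"
  proof (intro allI impI)
    fix j assume j: "1\<le>j \<and> j<n+2"
    then have "j \<le> n+1" by linarith
    then have "t (j+1) < s j" "s j < t j" using it j by simp_all
    then show "t (j+1) < t j" by linarith
  qed
  have "?Q = smult (coeff ?Q (n+2)) (\<Prod>j=1..n+2. [:- t j, 1:])"
    by (rule factor_lemma[OF _ refl dt]) (use degQ t in \<open>simp_all\<close>)
  then show ?thesis using dt it by blast
qed



lemma all_n:
  fixes c d :: "nat \<Rightarrow> real"
  defines "P \<equiv> Pseq c d"
  assumes Lpos: "\<And>m. coeff (P m) m > 0"
    and dpos: "\<And>m. d (m+2) > 0"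
  shows "\<exists>r s. (\<forall>j. 1\<le>j \<and> j<n \<longrightarrow> r (j+1) < r j) \<and>
     P n = smult (coeff (P n) n) (\<Prod>j=1..n. [:- r j, 1:]) \<and>
     (\<forall>j. 1\<le>j \<and> j<n+1 \<longrightarrow> s (j+1) < s j) \<and>
     P (n+1) = smult (coeff (P (n+1)) (n+1)) (\<Prod>j=1..n+1. [:- s j, 1:]) \<and>
     (\<forall>j. 1\<le>j \<and> j\<le>n \<longrightarrow> s (j+1) < r j \<and> r j < s j)"
proof (induction n)
  case 0
  show ?case
    by (rule exI[of _ "\<lambda>_. 0"], rule exI[of _ "\<lambda>_. c 1"]) (simp add: P_def)
next
  case (Suc n)
  then obtain r s where
    decR: "\<forall>j. 1\<le>j \<and> j<n \<longrightarrow> r (j+1) < r j"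
    and facR: "P n = smult (coeff (P n) n) (\<Prod>j=1..n. [:- r j, 1:])"
    and decS: "\<forall>j. 1\<le>j \<and> j<n+1 \<longrightarrow> s (j+1) < s j"
    and facS: "P (n+1) = smult (coeff (P (n+1)) (n+1)) (\<Prod>j=1..n+1. [:- s j, 1:])"
    and inter: "\<forall>j. 1\<le>j \<and> j\<le>n \<longrightarrow> s (j+1) < r j \<and> r j < s j" by blast
  obtain t where "(\<forall>j. 1\<le>j \<and> j<n+2 \<longrightarrow> t (j+1) < t j) \<and>
     P (n+2) = smult (coeff (P (n+2)) (n+2)) (\<Prod>j=1..n+2. [:- t j, 1:]) \<and>
     (\<forall>j. 1\<le>j \<and> j\<le>n+1 \<longrightarrow> t (j+1) < s j \<and> s j < t j)"
    using main_step[of c d n r s, OF Lpos[unfolded P_def] dpos decR[unfolded P_def] facR[unfolded P_def]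
        decS facS[unfolded P_def] inter] unfolding P_def by blast
  moreover have "Suc n + 1 = n + 2" by simp
  ultimately show ?case using decS facS by (intro exI[of _ s] exI[of _ t]) simp
qed

definition Xr :: "real poly \<Rightarrow> nat \<Rightarrow> real" where
  "Xr p j = (THE x. poly p x = 0 \<and> card {y. poly p y = 0 \<and> x < y} = j - 1)"

lemma Xr_eq:
  fixes r :: "nat \<Rightarrow> real"
  assumes dec: "\<forall>j. 1\<le>j \<and> j<n \<longrightarrow> r (j+1) < r j"
    and fac: "p = smult L (\<Prod>j=1..n. [:- r j, 1:])" and L: "L \<noteq> 0"
    and j: "1 \<le> j" "j \<le> n"
  shows "Xr p j = r j"
proof -
  have roots: "poly p x = 0 \<longleftrightarrow> x \<in> r ` {1..n}" for x
  proof -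
    have "poly p x = L * (\<Prod>j=1..n. (x - r j))" by (simp add: fac poly_prod)
    then have "poly p x = 0 \<longleftrightarrow> (\<Prod>j=1..n. (x - r j)) = 0" using L by simp
    also have "\<dots> \<longleftrightarrow> (\<exists>j\<in>{1..n}. x - r j = 0)" by (rule prod_zero_iff) simp
    also have "\<dots> \<longleftrightarrow> x \<in> r ` {1..n}" by auto
    finally show ?thesis .
  qed
  have cnt: "card {y. poly p y = 0 \<and> r i < y} = i - 1" if i: "1 \<le> i" "i \<le> n" for i
  proof -
    have "{y. poly p y = 0 \<and> r i < y} = r ` {1..<i}"
    proof (intro equalityI subsetI)
      fix y assume "y \<in> {y. poly p y = 0 \<and> r i < y}"
      then obtain m where m: "m \<in> {1..n}" "y = r m" "r i < r m" using roots by auto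
      have "m < i"
      proof (rule ccontr)
        assume "\<not> m < i"
        then have "r m \<le> r i" using dec_mono[OF dec, of i m] m i by (cases "m = i") auto
        then show False using m by simp
      qed
      then show "y \<in> r ` {1..<i}" using m by auto
    next
      fix y assume "y \<in> r ` {1..<i}"
      then obtain m where m: "m \<in> {1..<i}" "y = r m" by auto
      then have "r i < r m" using dec_mono[OF dec, of m i] i by auto
      then show "y \<in> {y. poly p y = 0 \<and> r i < y}" using roots m i by auto
    qed
    moreover have "inj_on r {1..<i}" by (rule inj_on_subset[OF dec_inj[OF dec]]) (use i in auto)
    ultimately show ?thesis by (simp add: card_image)
  qed
  show ?thesis unfolding Xr_def
  proof (rule the_equality)
    show "poly p (r j) = 0 \<and> card {y. poly p y = 0 \<and> r j < y} = j - 1"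
      using roots cnt j by auto
    fix x assume x: "poly p x = 0 \<and> card {y. poly p y = 0 \<and> x < y} = j - 1"
    then obtain i where i: "i \<in> {1..n}" "x = r i" using roots by auto
    then have "i - 1 = j - 1" using cnt[of i] x by auto
    then have "i = j" using i j by auto
    then show "x = r j" using i by simp
  qed
qed


theorem theorem2p2:
  fixes c d :: "nat \<Rightarrow> real"
  assumes "positive_chain_sequence d"
  shows "\<exists>X :: nat \<Rightarrow> nat \<Rightarrow> real. \<forall>n\<ge>1.
           lead_coeff (Pseq c d n) \<noteq> 0 \<and>
           Pseq c d n = smult (lead_coeff (Pseq c d n)) (\<Prod>j = 1..n. [:- X n j, 1:]) \<and>
           (\<forall>j. 1 \<le> j \<and> j < n \<longrightarrow> X n (j + 1) < X n j) \<and>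
           (\<forall>j. 1 \<le> j \<and> j \<le> n \<longrightarrow>
              X (n + 1) (j + 1) < X n j \<and> X n j < X (n + 1) j)"
proof -
  obtain g :: "nat \<Rightarrow> real" where g1: "0 \<le> g 1" "g 1 < 1" and g2: "\<forall>n\<ge>2. 0 < g n \<and> g n < 1"
    and dg: "\<forall>n\<ge>1. d (n + 1) = (1 - g n) * g (n + 1)"
    using assms unfolding positive_chain_sequence_def by blast
  have Lp: "coeff (Pseq c d m) m > 0" for m using Lpos[OF g1 g2 dg, where n = m and c = c] by blast
  have dp: "d (m+2) > 0" for m
  proof -
    have e: "d (m+2) = (1 - g (Suc m)) * g (Suc (Suc m))" using dg[rule_format, of "Suc m"] by simp
    have "g (Suc m) < 1" using g1 g2 by (cases m) auto
    moreover have "g (Suc (Suc m)) > 0" using g2 by auto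
    ultimately show ?thesis unfolding e by simp
  qed
  define X where "X n j = Xr (Pseq c d n) j" for n j
  show ?thesis
  proof (rule exI[of _ X], intro allI impI)
    fix n :: nat assume n1: "n \<ge> 1"
    obtain r s where
      decR: "\<forall>j. 1\<le>j \<and> j<n \<longrightarrow> r (j+1) < r j"
      and facR: "Pseq c d n = smult (coeff (Pseq c d n) n) (\<Prod>j=1..n. [:- r j, 1:])"
      and decS: "\<forall>j. 1\<le>j \<and> j<n+1 \<longrightarrow> s (j+1) < s j"
      and facS: "Pseq c d (n+1) = smult (coeff (Pseq c d (n+1)) (n+1)) (\<Prod>j=1..n+1. [:- s j, 1:])"
      and inter: "\<forall>j. 1\<le>j \<and> j\<le>n \<longrightarrow> s (j+1) < r j \<and> r j < s j"
      using all_n[of c d n, OF Lp dp] by blast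
    have lc: "lead_coeff (Pseq c d n) = coeff (Pseq c d n) n"
      using deg_exact[OF Pseq_deg, of c d n] Lp[of n] by simp
    have Xn: "X n j = r j" if "1 \<le> j" "j \<le> n" for j
      unfolding X_def by (rule Xr_eq[OF decR facR]) (use Lp[of n] that in auto)
    have Xn1: "X (n+1) j = s j" if "1 \<le> j" "j \<le> n+1" for j
      unfolding X_def by (rule Xr_eq[OF decS facS]) (use Lp[of "n+1"] that in auto)
    have "lead_coeff (Pseq c d n) \<noteq> 0" using lc Lp[of n] by simp
    moreover have "Pseq c d n = smult (lead_coeff (Pseq c d n)) (\<Prod>j = 1..n. [:- X n j, 1:])"
    proof -
      have "(\<Prod>j = 1..n. [:- X n j, 1:]) = (\<Prod>j = 1..n. [:- r j, 1:])"
        by (rule prod.cong) (auto simp: Xn)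
      then show ?thesis using facR lc by simp
    qed
    moreover have "\<forall>j. 1 \<le> j \<and> j < n \<longrightarrow> X n (j + 1) < X n j"
      using decR Xn by auto
    moreover have "\<forall>j. 1 \<le> j \<and> j \<le> n \<longrightarrow> X (n + 1) (j + 1) < X n j \<and> X n j < X (n + 1) j"
      using inter Xn Xn1 by auto
    ultimately show "lead_coeff (Pseq c d n) \<noteq> 0 \<and>
           Pseq c d n = smult (lead_coeff (Pseq c d n)) (\<Prod>j = 1..n. [:- X n j, 1:]) \<and>
           (\<forall>j. 1 \<le> j \<and> j < n \<longrightarrow> X n (j + 1) < X n j) \<and>
           (\<forall>j. 1 \<le> j \<and> j \<le> n \<longrightarrow>
              X (n + 1) (j + 1) < X n j \<and> X n j < X (n + 1) j)" by blast
  qed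
qed

end
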